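(* Let $n\ge1$. Identify each $n$-element subset of $\langle n\rangle$ with a partition inside the $n\times n$ square (as described in the context), so that meet $\wedge$ and join $\vee$ correspond to intersection and union of diagrams and $\alpha^t$ is the transpose. Define $\pi_n(\gamma):=(\gamma\wedge\gamma^t,\gamma\vee\gamma^t)$ for $\gamma\in\binom{\langle n\rangle}{n}$, and let $(\alpha,\beta)$ be in the image of $\pi_n$ (so $\alpha\subseteq\beta$ are symmetric partitions). Let $\Pi_+(\alpha,\beta)$ be the set of boxes of $\beta\setminus\alpha$ lying strictly above the main diagonal, and let $S_1,\dots,S_k$ be its connected components (two boxes being adjacent when they share an edge). For $I\subseteq[k]$ put $\gamma_I:=\alpha\cup\bigl(\bigcup_{i\notin I}S_i^t\bigr)\cup\bigl(\bigcup_{i\in I}S_i\bigr)$, where $S^t$ denotes the reflection of a set of boxes in the main diagonal. Then $I\mapsto\gamma_I$ is a bijection from the set of subsets of $[k]$ (i.e. subsets of the set of connected components of $\Pi_+(\alpha,\beta)$) onto the fiber $\pi_n^{-1}(\alpha,\beta)$. There is a unique Northeast element of $\pi_n^{-1}(\alpha,\beta)$, namely $\gamma_{[k]}$, and a unique Southwest element, namely $\gamma_{\emptyset}$.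
   Context: $\langle n\rangle=\{\bar n<\dots<\bar1<1<\dots<n\}$ with $\bar\imath=-i$. An $n$-element subset $\alpha\subseteq\langle n\rangle$ corresponds to a partition in the $n\times n$ square: take the lattice path from the lower-left to the upper-right corner whose $j$-th unit step is upward if the $j$-th smallest element of $\langle n\rangle$ lies in $\alpha$ and rightward otherwise; the partition consists of the boxes between the path and the top and left edges. Boxes are indexed $(r,c)$ (row from top, column from left); box $(r,c)$ is above the main diagonal if $c>r$. The transpose $\alpha^t$ is the reflection of the diagram in the main diagonal (as a set, $\alpha^t=\langle n\rangle\setminus\{\bar\alpha_1,\dots,\bar\alpha_n\}$). A partition $\lambda$ in the square is Northeast if $\lambda_-^t\subseteq\lambda_+$, where $\lambda_+$ (resp. $\lambda_-$) is the set of boxes of $\lambda$ on or above (resp. on or below) the main diagonal, i.e. if for every box $(r,c)\in\lambda$ with $r>c$ the box $(c,r)$ lies in $\lambda$; $\lambda$ is Southwest if $\lambda^t$ is Northeast. *)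

theory Defs
  imports Main
begin

text \<open>Boxes of the n x n square are pairs (r,c) with 1 \<le> r,c \<le> n,
  r = row counted from the top, c = column counted from the left.
  A partition inside the square (Young diagram, English convention, anchored at the
  upper-left corner) is a set of boxes closed under moving up and moving left.
  These are exactly the diagrams of the n-element subsets of the set \<langle>n\<rangle>.\<close>

type_synonym box = "nat \<times> nat"

definition in_square_partition :: "nat \<Rightarrow> box set \<Rightarrow> bool" where
  "in_square_partition n L \<longleftrightarrow>
     L \<subseteq> {1..n} \<times> {1..n} \<and>
     (\<forall>r c r' c'. (r, c) \<in> L \<and> 1 \<le> r' \<and> r' \<le> r \<and> 1 \<le> c' \<and> c' \<le> c \<longrightarrow> (r', c') \<in> L)"

definition transp_boxes :: "box set \<Rightarrow> box set" where
  "transp_boxes S = (\<lambda>(r, c). (c, r)) ` S"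

definition pi_map :: "box set \<Rightarrow> box set \<times> box set" where
  "pi_map \<gamma> = (\<gamma> \<inter> transp_boxes \<gamma>, \<gamma> \<union> transp_boxes \<gamma>)"

definition fiber :: "nat \<Rightarrow> box set \<Rightarrow> box set \<Rightarrow> box set set" where
  "fiber n \<alpha> \<beta> = {\<gamma>. in_square_partition n \<gamma> \<and> pi_map \<gamma> = (\<alpha>, \<beta>)}"

definition northeast :: "box set \<Rightarrow> bool" where
  "northeast L \<longleftrightarrow> (\<forall>r c. (r, c) \<in> L \<and> r > c \<longrightarrow> (c, r) \<in> L)"

definition southwest :: "box set \<Rightarrow> bool" where
  "southwest L \<longleftrightarrow> northeast (transp_boxes L)"

definition Pi_plus :: "box set \<Rightarrow> box set \<Rightarrow> box set" where
  "Pi_plus \<alpha> \<beta> = {(r, c). (r, c) \<in> \<beta> - \<alpha> \<and> c > r}"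

definition box_adj :: "box \<Rightarrow> box \<Rightarrow> bool" where
  "box_adj x y \<longleftrightarrow>
     (fst x = fst y \<and> (snd x = snd y + 1 \<or> snd y = snd x + 1)) \<or>
     (snd x = snd y \<and> (fst x = fst y + 1 \<or> fst y = fst x + 1))"

definition adj_within :: "box set \<Rightarrow> (box \<times> box) set" where
  "adj_within P = {(x, y). x \<in> P \<and> y \<in> P \<and> box_adj x y}"

definition component_of :: "box set \<Rightarrow> box \<Rightarrow> box set" where
  "component_of P x = {y \<in> P. (x, y) \<in> (adj_within P)\<^sup>*}"

definition components :: "box set \<Rightarrow> box set set" where
  "components P = component_of P ` P"

definition gamma_I :: "box set \<Rightarrow> box set \<Rightarrow> box set set \<Rightarrow> box set" where
  "gamma_I \<alpha> \<beta> I =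
     \<alpha> \<union> (\<Union>S \<in> components (Pi_plus \<alpha> \<beta>) - I. transp_boxes S) \<union> (\<Union>S \<in> I. S)"

end

theory Submission
  imports Defs
begin

lemma tb_mem[simp]: "((a,b) \<in> transp_boxes S) = ((b,a) \<in> S)"
  by (force simp: transp_boxes_def image_iff)

lemma box_adj_sym: "box_adj x y = box_adj y x" unfolding box_adj_def by auto

lemma adj_sym: "sym (adj_within P)"
  unfolding sym_def adj_within_def by (auto simp: box_adj_sym)

lemma rtr_sym: "(x,y) \<in> (adj_within P)\<^sup>* \<Longrightarrow> (y,x) \<in> (adj_within P)\<^sup>*"
  using sym_rtrancl[OF adj_sym] by (meson symD)

lemma comp_sub: "component_of P x \<subseteq> P" unfolding component_of_def by auto

lemma comp_self: "x \<in> P \<Longrightarrow> x \<in> component_of P x" unfolding component_of_def by auto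

lemma comp_eq: assumes "z \<in> component_of P x" shows "component_of P z = component_of P x"
proof -
  have xz: "(x,z) \<in> (adj_within P)\<^sup>*" using assms unfolding component_of_def by auto
  hence zx: "(z,x) \<in> (adj_within P)\<^sup>*" by (rule rtr_sym)
  show ?thesis unfolding component_of_def using xz zx by (auto intro: rtrancl_trans)
qed

lemma adj_comp: "x \<in> P \<Longrightarrow> y \<in> P \<Longrightarrow> box_adj x y \<Longrightarrow> y \<in> component_of P x"
  unfolding component_of_def adj_within_def by auto

lemma comp_adj_eq: "x \<in> P \<Longrightarrow> y \<in> P \<Longrightarrow> box_adj x y \<Longrightarrow> component_of P y = component_of P x"
  using adj_comp comp_eq by metis

lemma comp_unique: "S \<in> components P \<Longrightarrow> z \<in> S \<Longrightarrow> S = component_of P z"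
  unfolding components_def using comp_eq by fastforce

lemma comp_in: "z \<in> P \<Longrightarrow> component_of P z \<in> components P" unfolding components_def by auto

lemma comps_sub: "S \<in> components P \<Longrightarrow> S \<subseteq> P" unfolding components_def using comp_sub by auto

lemma comps_ne: "S \<in> components P \<Longrightarrow> \<exists>x. x \<in> S" unfolding components_def using comp_self by blast

lemma isp_dc: "in_square_partition n L \<Longrightarrow> (r,c) \<in> L \<Longrightarrow> 1 \<le> r' \<Longrightarrow> r' \<le> r \<Longrightarrow> 1 \<le> c' \<Longrightarrow> c' \<le> c \<Longrightarrow> (r',c') \<in> L"
  unfolding in_square_partition_def by blast

lemma isp_sq: "in_square_partition n L \<Longrightarrow> (r,c) \<in> L \<Longrightarrow> 1 \<le> r \<and> r \<le> n \<and> 1 \<le> c \<and> c \<le> n"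
  unfolding in_square_partition_def by auto

lemma steps_left:
  fixes k :: nat
  assumes left: "\<And>r c. (r,c) \<in> L \<Longrightarrow> 2 \<le> c \<Longrightarrow> (r, c - 1) \<in> L"
  shows "(r,c) \<in> L \<Longrightarrow> k < c \<Longrightarrow> (r, c - k) \<in> L"
proof (induction k)
  case 0 thus ?case by simp
next
  case (Suc k)
  hence "(r, c - k) \<in> L" by simp
  from left[OF this] Suc.prems have "(r, c - k - 1) \<in> L" by simp
  moreover have "c - k - 1 = c - Suc k" by arith
  ultimately show ?case by simp
qed

lemma steps_up:
  fixes k :: nat
  assumes up: "\<And>r c. (r,c) \<in> L \<Longrightarrow> 2 \<le> r \<Longrightarrow> (r - 1, c) \<in> L"
  shows "(r,c) \<in> L \<Longrightarrow> k < r \<Longrightarrow> (r - k, c) \<in> L"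
proof (induction k)
  case 0 thus ?case by simp
next
  case (Suc k)
  hence "(r - k, c) \<in> L" by simp
  from up[OF this] Suc.prems have "(r - k - 1, c) \<in> L" by simp
  moreover have "r - k - 1 = r - Suc k" by arith
  ultimately show ?case by simp
qed

lemma dc_from_steps:
  fixes L :: "box set"
  assumes left: "\<And>r c. (r,c) \<in> L \<Longrightarrow> 2 \<le> c \<Longrightarrow> (r, c - 1) \<in> L"
      and up: "\<And>r c. (r,c) \<in> L \<Longrightarrow> 2 \<le> r \<Longrightarrow> (r - 1, c) \<in> L"
      and m: "(r,c) \<in> L" "1 \<le> r'" "r' \<le> r" "1 \<le> c'" "c' \<le> c"
  shows "(r',c') \<in> L"
proof -
  have "c - c' < c" using m by arith
  hence "(r, c - (c - c')) \<in> L" using steps_left[OF left m(1), of "c - c'"] by simp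
  hence "(r, c') \<in> L" using m by simp
  moreover have "r - r' < r" using m by arith
  ultimately have "(r - (r - r'), c') \<in> L" using steps_up[OF up, of r c' "r - r'"] by simp
  thus ?thesis using m by simp
qed

lemma adj_step:
  assumes gp: "in_square_partition n \<gamma>" and y: "(r,c) \<in> \<gamma>" "(c,r) \<notin> \<gamma>"
    and z: "(a,b) \<in> \<gamma> \<union> transp_boxes \<gamma>" and adj: "box_adj (r,c) (a,b)"
  shows "(a,b) \<in> \<gamma>"
proof -
  have sq: "1 \<le> r \<and> 1 \<le> c" using isp_sq[OF gp y(1)] by simp
  have zz: "(a,b) \<in> \<gamma> \<or> (b,a) \<in> \<gamma>" using z by simp
  have sqz: "1 \<le> a \<and> 1 \<le> b"
  proof (cases "(a,b) \<in> \<gamma>")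
    case True thus ?thesis using isp_sq[OF gp True] by simp
  next
    case False hence "(b,a) \<in> \<gamma>" using zz by simp
    thus ?thesis using isp_sq[OF gp, of b a] by simp
  qed
  show ?thesis
  proof (rule ccontr)
    assume nz: "(a,b) \<notin> \<gamma>"
    hence ba: "(b,a) \<in> \<gamma>" using zz by simp
    from adj consider "a = r" "b + 1 = c" | "a = r" "b = c + 1" | "b = c" "a + 1 = r" | "b = c" "a = r + 1"
      unfolding box_adj_def by auto
    thus False
    proof cases
      case 1
      have "(a,b) \<in> \<gamma>" by (rule isp_dc[OF gp y(1)]) (use 1 sqz in simp_all)
      thus False using nz by simp
    next
      case 2
      have "(c,r) \<in> \<gamma>" by (rule isp_dc[OF gp ba]) (use 2 sq in simp_all)
      thus False using y(2) by simp
    next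
      case 3
      have "(a,b) \<in> \<gamma>" by (rule isp_dc[OF gp y(1)]) (use 3 sqz in simp_all)
      thus False using nz by simp
    next
      case 4
      have "(c,r) \<in> \<gamma>" by (rule isp_dc[OF gp ba]) (use 4 sq in simp_all)
      thus False using y(2) by simp
    qed
  qed
qed


locale setting =
  fixes n :: nat and g0 \<alpha> \<beta> :: "box set"
  assumes g0: "in_square_partition n g0"
    and A: "\<alpha> = g0 \<inter> transp_boxes g0" and B: "\<beta> = g0 \<union> transp_boxes g0"
begin

abbreviation "PP \<equiv> Pi_plus \<alpha> \<beta>"
abbreviation "CC \<equiv> components PP"

lemma asym: "((a,b) \<in> \<alpha>) = ((b,a) \<in> \<alpha>)" unfolding A by auto
lemma bsym: "((a,b) \<in> \<beta>) = ((b,a) \<in> \<beta>)" unfolding B by auto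
lemma ab: "\<alpha> \<subseteq> \<beta>" unfolding A B by auto

lemma bsq: "(r,c) \<in> \<beta> \<Longrightarrow> 1 \<le> r \<and> r \<le> n \<and> 1 \<le> c \<and> c \<le> n"
  unfolding B using isp_sq[OF g0, of r c] isp_sq[OF g0, of c r] by auto

lemma bdc: assumes "(r,c) \<in> \<beta>" "1 \<le> r'" "r' \<le> r" "1 \<le> c'" "c' \<le> c" shows "(r',c') \<in> \<beta>"
proof -
  have "(r,c) \<in> g0 \<or> (c,r) \<in> g0" using assms(1) B by simp
  thus ?thesis
  proof
    assume "(r,c) \<in> g0" thus ?thesis using isp_dc[OF g0 _ assms(2-5)] B by simp
  next
    assume "(c,r) \<in> g0" thus ?thesis using isp_dc[OF g0 _ assms(4,5,2,3)] B by simp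
  qed
qed

lemma adc: assumes "(r,c) \<in> \<alpha>" "1 \<le> r'" "r' \<le> r" "1 \<le> c'" "c' \<le> c" shows "(r',c') \<in> \<alpha>"
proof -
  have "(r,c) \<in> g0" "(c,r) \<in> g0" using assms(1) A by auto
  thus ?thesis using isp_dc[OF g0 _ assms(2-5)] isp_dc[OF g0 _ assms(4,5,2,3)] A by simp
qed

lemma diag: "(a,a) \<in> \<beta> \<Longrightarrow> (a,a) \<in> \<alpha>" unfolding A B by auto

lemma P_mem: "((r,c) \<in> PP) = ((r,c) \<in> \<beta> \<and> (r,c) \<notin> \<alpha> \<and> r < c)"
  unfolding Pi_plus_def by auto

lemma mem_gI:
  assumes I: "I \<subseteq> CC"
  shows "((r,c) \<in> gamma_I \<alpha> \<beta> I) = ((r,c) \<in> \<alpha> \<or> ((r,c) \<in> PP \<and> component_of PP (r,c) \<in> I)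
           \<or> ((c,r) \<in> PP \<and> component_of PP (c,r) \<notin> I))"
proof -
  have 1: "((r,c) \<in> (\<Union>S \<in> I. S)) = ((r,c) \<in> PP \<and> component_of PP (r,c) \<in> I)"
  proof
    assume "(r,c) \<in> (\<Union>S \<in> I. S)"
    then obtain S where S: "S \<in> I" "(r,c) \<in> S" by blast
    hence "S \<in> CC" using I by blast
    thus "(r,c) \<in> PP \<and> component_of PP (r,c) \<in> I"
      using S comp_unique[of S PP "(r,c)"] comps_sub[of S PP] by auto
  next
    assume "(r,c) \<in> PP \<and> component_of PP (r,c) \<in> I"
    thus "(r,c) \<in> (\<Union>S \<in> I. S)" using comp_self[of "(r,c)" PP] by blast
  qed
  have 2: "((r,c) \<in> (\<Union>S \<in> CC - I. transp_boxes S)) = ((c,r) \<in> PP \<and> component_of PP (c,r) \<notin> I)"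
  proof
    assume "(r,c) \<in> (\<Union>S \<in> CC - I. transp_boxes S)"
    then obtain S where S: "S \<in> CC" "S \<notin> I" "(c,r) \<in> S" by auto
    thus "(c,r) \<in> PP \<and> component_of PP (c,r) \<notin> I"
      using comp_unique[of S PP "(c,r)"] comps_sub[of S PP] by auto
  next
    assume h: "(c,r) \<in> PP \<and> component_of PP (c,r) \<notin> I"
    hence "component_of PP (c,r) \<in> CC - I" using comp_in by blast
    moreover have "(r,c) \<in> transp_boxes (component_of PP (c,r))" using h comp_self by simp
    ultimately show "(r,c) \<in> (\<Union>S \<in> CC - I. transp_boxes S)" by blast
  qed
  show ?thesis unfolding gamma_I_def using 1 2 by blast
qed


lemma gI_sub: assumes I: "I \<subseteq> CC" and z: "(r,c) \<in> gamma_I \<alpha> \<beta> I" shows "(r,c) \<in> \<beta>"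
  using z unfolding mem_gI[OF I] using ab P_mem bsym by blast

lemma gI_left:
  assumes I: "I \<subseteq> CC" and z: "(r,c) \<in> gamma_I \<alpha> \<beta> I" and c2: "2 \<le> c"
  shows "(r,c-1) \<in> gamma_I \<alpha> \<beta> I"
proof -
  have zb: "(r,c) \<in> \<beta>" by (rule gI_sub[OF I z])
  have r1: "1 \<le> r" using bsq[OF zb] by simp
  have zb': "(r,c-1) \<in> \<beta>" by (rule bdc[OF zb]) (use r1 c2 in simp_all)
  show ?thesis
  proof (cases "(r,c-1) \<in> \<alpha>")
    case True thus ?thesis unfolding mem_gI[OF I] by simp
  next
    case na: False
    from z consider "(r,c) \<in> \<alpha>" | "(r,c) \<in> PP" "component_of PP (r,c) \<in> I"
      | "(c,r) \<in> PP" "component_of PP (c,r) \<notin> I" unfolding mem_gI[OF I] by blast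
    thus ?thesis
    proof cases
      case 1
      have "(r,c-1) \<in> \<alpha>" by (rule adc[OF 1]) (use r1 c2 in simp_all)
      thus ?thesis using na by simp
    next
      case 2
      have "r < c" using 2 P_mem by simp
      moreover have "c - 1 \<noteq> r" using diag zb' na by auto
      ultimately have "r < c - 1" by arith
      hence p: "(r,c-1) \<in> PP" using P_mem zb' na by simp
      have "box_adj (r,c) (r,c-1)" unfolding box_adj_def using c2 by simp
      hence "component_of PP (r,c-1) = component_of PP (r,c)" using comp_adj_eq 2(1) p by blast
      thus ?thesis unfolding mem_gI[OF I] using p 2 by simp
    next
      case 3
      have cr: "c < r" using 3 P_mem by simp
      have "(c-1,r) \<in> \<beta>" "(c-1,r) \<notin> \<alpha>" using zb' na bsym asym by auto
      hence p: "(c-1,r) \<in> PP" using P_mem cr by simp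
      have "box_adj (c,r) (c-1,r)" unfolding box_adj_def using c2 by simp
      hence "component_of PP (c-1,r) = component_of PP (c,r)" using comp_adj_eq 3(1) p by blast
      thus ?thesis unfolding mem_gI[OF I] using p 3 by simp
    qed
  qed
qed

lemma gI_up:
  assumes I: "I \<subseteq> CC" and z: "(r,c) \<in> gamma_I \<alpha> \<beta> I" and r2: "2 \<le> r"
  shows "(r-1,c) \<in> gamma_I \<alpha> \<beta> I"
proof -
  have zb: "(r,c) \<in> \<beta>" by (rule gI_sub[OF I z])
  have c1: "1 \<le> c" using bsq[OF zb] by simp
  have zb': "(r-1,c) \<in> \<beta>" by (rule bdc[OF zb]) (use c1 r2 in simp_all)
  show ?thesis
  proof (cases "(r-1,c) \<in> \<alpha>")
    case True thus ?thesis unfolding mem_gI[OF I] by simp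
  next
    case na: False
    from z consider "(r,c) \<in> \<alpha>" | "(r,c) \<in> PP" "component_of PP (r,c) \<in> I"
      | "(c,r) \<in> PP" "component_of PP (c,r) \<notin> I" unfolding mem_gI[OF I] by blast
    thus ?thesis
    proof cases
      case 1
      have "(r-1,c) \<in> \<alpha>" by (rule adc[OF 1]) (use c1 r2 in simp_all)
      thus ?thesis using na by simp
    next
      case 2
      have "r < c" using 2 P_mem by simp
      hence p: "(r-1,c) \<in> PP" using P_mem zb' na by simp
      have "box_adj (r,c) (r-1,c)" unfolding box_adj_def using r2 by simp
      hence "component_of PP (r-1,c) = component_of PP (r,c)" using comp_adj_eq 2(1) p by blast
      thus ?thesis unfolding mem_gI[OF I] using p 2 by simp
    next
      case 3
      have cr: "c < r" using 3 P_mem by simp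
      have b: "(c,r-1) \<in> \<beta>" "(c,r-1) \<notin> \<alpha>" using zb' na bsym asym by auto
      moreover have "r - 1 \<noteq> c" using diag b by auto
      ultimately have p: "(c,r-1) \<in> PP" using P_mem cr by simp
      have "box_adj (c,r) (c,r-1)" unfolding box_adj_def using r2 by simp
      hence "component_of PP (c,r-1) = component_of PP (c,r)" using comp_adj_eq 3(1) p by blast
      thus ?thesis unfolding mem_gI[OF I] using p 3 by simp
    qed
  qed
qed

lemma gI_isp: assumes I: "I \<subseteq> CC" shows "in_square_partition n (gamma_I \<alpha> \<beta> I)"
  unfolding in_square_partition_def
proof (intro conjI allI impI)
  show "gamma_I \<alpha> \<beta> I \<subseteq> {1..n} \<times> {1..n}"
    using gI_sub[OF I] bsq by fastforce
next
  fix r c r' c'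
  assume h: "(r, c) \<in> gamma_I \<alpha> \<beta> I \<and> 1 \<le> r' \<and> r' \<le> r \<and> 1 \<le> c' \<and> c' \<le> c"
  show "(r', c') \<in> gamma_I \<alpha> \<beta> I"
    using dc_from_steps[of "gamma_I \<alpha> \<beta> I", OF gI_left[OF I] gI_up[OF I]] h by blast
qed

lemma gI_pi: assumes I: "I \<subseteq> CC" shows "pi_map (gamma_I \<alpha> \<beta> I) = (\<alpha>, \<beta>)"
proof -
  let ?g = "gamma_I \<alpha> \<beta> I"
  have M: "\<And>r c. ((r,c) \<in> ?g) = ((r,c) \<in> \<alpha> \<or> ((r,c) \<in> \<beta> \<and> (r,c) \<notin> \<alpha> \<and> r < c \<and> component_of PP (r,c) \<in> I)
           \<or> ((c,r) \<in> \<beta> \<and> (c,r) \<notin> \<alpha> \<and> c < r \<and> component_of PP (c,r) \<notin> I))"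
    using mem_gI[OF I] P_mem by simp
  have "?g \<inter> transp_boxes ?g = \<alpha>"
  proof (rule set_eqI)
    fix z :: box obtain r c where z: "z = (r,c)" by fastforce
    show "(z \<in> ?g \<inter> transp_boxes ?g) = (z \<in> \<alpha>)"
      unfolding z using M[of r c] M[of c r] asym[of r c] by auto
  qed
  moreover have "?g \<union> transp_boxes ?g = \<beta>"
  proof (rule set_eqI)
    fix z :: box obtain r c where z: "z = (r,c)" by fastforce
    have "(r,c) \<in> \<beta> \<Longrightarrow> (r,c) \<notin> \<alpha> \<Longrightarrow> r \<noteq> c" using diag by auto
    thus "(z \<in> ?g \<union> transp_boxes ?g) = (z \<in> \<beta>)"
      unfolding z using M[of r c] M[of c r] asym[of r c] bsym[of r c] ab
      by (cases "r < c") auto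
  qed
  ultimately show ?thesis unfolding pi_map_def by simp
qed


lemma fib_props: assumes "\<gamma> \<in> fiber n \<alpha> \<beta>"
  shows "in_square_partition n \<gamma>" "\<gamma> \<inter> transp_boxes \<gamma> = \<alpha>" "\<gamma> \<union> transp_boxes \<gamma> = \<beta>"
  using assms unfolding fiber_def pi_map_def by auto

lemma reach:
  assumes f: "\<gamma> \<in> fiber n \<alpha> \<beta>" and x: "x \<in> \<gamma>" and xy: "(x,y) \<in> (adj_within PP)\<^sup>*"
  shows "y \<in> \<gamma>"
  using xy
proof (induction rule: rtrancl_induct)
  case base thus ?case using x .
next
  case (step y z)
  obtain a b where y: "y = (a,b)" by fastforce
  obtain a' b' where z: "z = (a',b')" by fastforce
  have yP: "y \<in> PP" and zP: "z \<in> PP" and adj: "box_adj y z" using step(2) unfolding adj_within_def by auto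
  have "(b,a) \<notin> \<gamma>"
  proof
    assume "(b,a) \<in> \<gamma>"
    hence "(a,b) \<in> \<alpha>" using step(3) y fib_props(2)[OF f] by auto
    thus False using yP y P_mem by simp
  qed
  moreover have "(a',b') \<in> \<gamma> \<union> transp_boxes \<gamma>" using zP z P_mem fib_props(3)[OF f] by simp
  ultimately show ?case using adj_step[OF fib_props(1)[OF f], of a b a' b'] step(3) adj y z by simp
qed

lemma dich: assumes f: "\<gamma> \<in> fiber n \<alpha> \<beta>" and x: "x \<in> PP"
  shows "(component_of PP x \<subseteq> \<gamma>) = (x \<in> \<gamma>)"
  using comp_self[OF x] reach[OF f] unfolding component_of_def by blast

lemma fib_gI: assumes f: "\<gamma> \<in> fiber n \<alpha> \<beta>"
  shows "\<gamma> = gamma_I \<alpha> \<beta> {S \<in> CC. S \<subseteq> \<gamma>}"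
proof (rule set_eqI)
  fix z :: box obtain r c where z: "z = (r,c)" by fastforce
  have I: "{S \<in> CC. S \<subseteq> \<gamma>} \<subseteq> CC" by blast
  have ci: "\<And>x. x \<in> PP \<Longrightarrow> (component_of PP x \<in> {S \<in> CC. S \<subseteq> \<gamma>}) = (x \<in> \<gamma>)"
    using dich[OF f] comp_in by blast
  have gA: "\<gamma> \<inter> transp_boxes \<gamma> = \<alpha>" and gB: "\<gamma> \<union> transp_boxes \<gamma> = \<beta>"
    using fib_props[OF f] by auto
  have M: "((r,c) \<in> gamma_I \<alpha> \<beta> {S \<in> CC. S \<subseteq> \<gamma>}) =
     ((r,c) \<in> \<alpha> \<or> ((r,c) \<in> PP \<and> (r,c) \<in> \<gamma>) \<or> ((c,r) \<in> PP \<and> (c,r) \<notin> \<gamma>))"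
    unfolding mem_gI[OF I] using ci by blast
  have e1: "(r,c) \<in> \<alpha> \<longleftrightarrow> (r,c) \<in> \<gamma> \<and> (c,r) \<in> \<gamma>" using gA by auto
  have e2: "(r,c) \<in> \<beta> \<longleftrightarrow> (r,c) \<in> \<gamma> \<or> (c,r) \<in> \<gamma>" using gB by auto
  have e3: "(c,r) \<in> \<beta> \<longleftrightarrow> (r,c) \<in> \<gamma> \<or> (c,r) \<in> \<gamma>" using gB by auto
  have e4: "(c,r) \<in> \<alpha> \<longleftrightarrow> (r,c) \<in> \<gamma> \<and> (c,r) \<in> \<gamma>" using gA by auto
  have dg: "(r,c) \<in> \<beta> \<Longrightarrow> (r,c) \<notin> \<alpha> \<Longrightarrow> r \<noteq> c" using diag by auto
  show "(z \<in> \<gamma>) = (z \<in> gamma_I \<alpha> \<beta> {S \<in> CC. S \<subseteq> \<gamma>})"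
    unfolding z M P_mem using e1 e2 e3 e4 dg by (cases "r < c") auto
qed

lemma gI_inj: assumes I: "I \<subseteq> CC" and J: "J \<subseteq> CC" and eq: "gamma_I \<alpha> \<beta> I = gamma_I \<alpha> \<beta> J"
  shows "I \<subseteq> J"
proof
  fix S assume S: "S \<in> I"
  hence SC: "S \<in> CC" using I by blast
  then obtain x where x: "x \<in> S" using comps_ne by blast
  obtain r c where xrc: "x = (r,c)" by fastforce
  have Sx: "S = component_of PP (r,c)" using comp_unique[OF SC x] xrc by simp
  have xP: "(r,c) \<in> PP" using comps_sub[OF SC] x xrc by auto
  hence "(r,c) \<in> gamma_I \<alpha> \<beta> I" unfolding mem_gI[OF I] using S Sx by simp
  hence "(r,c) \<in> gamma_I \<alpha> \<beta> J" using eq by simp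
  thus "S \<in> J" unfolding mem_gI[OF J] using xP Sx P_mem by auto
qed


lemma gI_fib: "I \<subseteq> CC \<Longrightarrow> gamma_I \<alpha> \<beta> I \<in> fiber n \<alpha> \<beta>"
  unfolding fiber_def using gI_isp gI_pi by blast

lemma bij: "bij_betw (gamma_I \<alpha> \<beta>) (Pow CC) (fiber n \<alpha> \<beta>)"
  unfolding bij_betw_def
proof
  show "inj_on (gamma_I \<alpha> \<beta>) (Pow CC)"
    unfolding inj_on_def using gI_inj by (metis PowD subset_antisym)
  show "gamma_I \<alpha> \<beta> ` Pow CC = fiber n \<alpha> \<beta>"
  proof
    show "gamma_I \<alpha> \<beta> ` Pow CC \<subseteq> fiber n \<alpha> \<beta>" using gI_fib by blast
    show "fiber n \<alpha> \<beta> \<subseteq> gamma_I \<alpha> \<beta> ` Pow CC"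
    proof
      fix \<gamma> assume f: "\<gamma> \<in> fiber n \<alpha> \<beta>"
      have "{S \<in> CC. S \<subseteq> \<gamma>} \<in> Pow CC" by blast
      thus "\<gamma> \<in> gamma_I \<alpha> \<beta> ` Pow CC" using fib_gI[OF f] by blast
    qed
  qed
qed

lemma ne_C: "northeast (gamma_I \<alpha> \<beta> CC)"
  unfolding northeast_def
proof (intro allI impI)
  fix r c assume h: "(r, c) \<in> gamma_I \<alpha> \<beta> CC \<and> c < r"
  hence "(r,c) \<in> \<alpha>" unfolding mem_gI[OF subset_refl] using P_mem comp_in by auto
  thus "(c, r) \<in> gamma_I \<alpha> \<beta> CC" unfolding mem_gI[OF subset_refl] using asym by simp
qed

lemma sw_E: "southwest (gamma_I \<alpha> \<beta> {})"
  unfolding southwest_def northeast_def tb_mem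
proof (intro allI impI)
  fix r c assume h: "(c, r) \<in> gamma_I \<alpha> \<beta> {} \<and> c < r"
  hence "(c,r) \<in> \<alpha>" unfolding mem_gI[OF empty_subsetI] using P_mem by auto
  thus "(r, c) \<in> gamma_I \<alpha> \<beta> {}" unfolding mem_gI[OF empty_subsetI] using asym by simp
qed

lemma ne_uniq: assumes f: "\<gamma> \<in> fiber n \<alpha> \<beta>" and ne: "northeast \<gamma>"
  shows "\<gamma> = gamma_I \<alpha> \<beta> CC"
proof -
  have "{S \<in> CC. S \<subseteq> \<gamma>} = CC"
  proof (intro set_eqI iffI)
    fix S assume SC: "S \<in> CC"
    then obtain x where x: "x \<in> S" using comps_ne by blast
    obtain a b where xab: "x = (a,b)" by fastforce
    have Sx: "S = component_of PP x" using comp_unique[OF SC x] .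
    have xP: "x \<in> PP" using comps_sub[OF SC] x by auto
    have "x \<in> \<gamma>"
    proof (rule ccontr)
      assume nx: "x \<notin> \<gamma>"
      have "(a,b) \<in> \<beta>" "a < b" using xP xab P_mem by auto
      hence "(b,a) \<in> \<gamma>" using nx xab fib_props(3)[OF f] by auto
      hence "(a,b) \<in> \<gamma>" using ne \<open>a < b\<close> unfolding northeast_def by blast
      thus False using nx xab by simp
    qed
    thus "S \<in> {S \<in> CC. S \<subseteq> \<gamma>}" using dich[OF f xP] Sx SC by simp
  qed auto
  thus ?thesis using fib_gI[OF f] by simp
qed

lemma sw_uniq: assumes f: "\<gamma> \<in> fiber n \<alpha> \<beta>" and sw: "southwest \<gamma>"
  shows "\<gamma> = gamma_I \<alpha> \<beta> {}"
proof -
  have "{S \<in> CC. S \<subseteq> \<gamma>} = {}"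
  proof (intro set_eqI iffI)
    fix S assume S: "S \<in> {S \<in> CC. S \<subseteq> \<gamma>}"
    hence SC: "S \<in> CC" and Sg: "S \<subseteq> \<gamma>" by auto
    then obtain x where x: "x \<in> S" using comps_ne by blast
    obtain a b where xab: "x = (a,b)" by fastforce
    have xP: "x \<in> PP" using comps_sub[OF SC] x by auto
    have ab: "a < b" "(a,b) \<notin> \<alpha>" using xP xab P_mem by auto
    have "(a,b) \<in> \<gamma>" using Sg x xab by auto
    hence "(b,a) \<in> \<gamma>" using sw ab unfolding southwest_def northeast_def tb_mem by blast
    hence "(a,b) \<in> \<alpha>" using \<open>(a,b) \<in> \<gamma>\<close> fib_props(2)[OF f] by auto
    thus "S \<in> {}" using ab by simp
  qed auto
  thus ?thesis using fib_gI[OF f] by metis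
qed

lemma main:
  "bij_betw (gamma_I \<alpha> \<beta>) (Pow (components (Pi_plus \<alpha> \<beta>))) (fiber n \<alpha> \<beta>)
    \<and> (\<exists>!\<gamma>. \<gamma> \<in> fiber n \<alpha> \<beta> \<and> northeast \<gamma>)
    \<and> gamma_I \<alpha> \<beta> (components (Pi_plus \<alpha> \<beta>)) \<in> fiber n \<alpha> \<beta>
    \<and> northeast (gamma_I \<alpha> \<beta> (components (Pi_plus \<alpha> \<beta>)))
    \<and> (\<exists>!\<gamma>. \<gamma> \<in> fiber n \<alpha> \<beta> \<and> southwest \<gamma>)
    \<and> gamma_I \<alpha> \<beta> {} \<in> fiber n \<alpha> \<beta>
    \<and> southwest (gamma_I \<alpha> \<beta> {})"
  using bij gI_fib[OF subset_refl] gI_fib[OF empty_subsetI] ne_C sw_E ne_uniq sw_uniq by blast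

end

theorem proposition2p10:
  fixes n :: nat and \<alpha> \<beta> :: "box set"
  assumes "n \<ge> 1"
    and "(\<alpha>, \<beta>) \<in> pi_map ` {\<gamma>. in_square_partition n \<gamma>}"
  shows "bij_betw (gamma_I \<alpha> \<beta>) (Pow (components (Pi_plus \<alpha> \<beta>))) (fiber n \<alpha> \<beta>)
    \<and> (\<exists>!\<gamma>. \<gamma> \<in> fiber n \<alpha> \<beta> \<and> northeast \<gamma>)
    \<and> gamma_I \<alpha> \<beta> (components (Pi_plus \<alpha> \<beta>)) \<in> fiber n \<alpha> \<beta>
    \<and> northeast (gamma_I \<alpha> \<beta> (components (Pi_plus \<alpha> \<beta>)))
    \<and> (\<exists>!\<gamma>. \<gamma> \<in> fiber n \<alpha> \<beta> \<and> southwest \<gamma>)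
    \<and> gamma_I \<alpha> \<beta> {} \<in> fiber n \<alpha> \<beta>
    \<and> southwest (gamma_I \<alpha> \<beta> {})"
proof -
  obtain g0 where g0: "in_square_partition n g0" and e: "(\<alpha>, \<beta>) = pi_map g0"
    using assms(2) by blast
  interpret setting n g0 \<alpha> \<beta>
    using g0 e unfolding pi_map_def by unfold_locales auto
  show ?thesis by (rule main)
qed

end
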